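(* Let $d\in\mathbb N$, $D=[-\frac12,\frac12]^d$ and $\Phi:\mathbb R^d\to[0,\infty)$. Assume there exists $x_\star$ in the interior of $D$ such that for every $r>0$, $\inf_{x\in D,\|x-x_\star\|>r}\Phi(x)-\Phi(x_\star)>0$; $\Phi$ is $(4d+3)$ times continuously differentiable in a neighborhood of $x_\star$ with $H_\star=\nabla^2\Phi(x_\star)$ positive definite; and $\Phi$ is $d$ times continuously differentiable on $\mathbb R^d$. Write $H_\star=QDQ^\top$ with $Q$ orthogonal and $D=\mathrm{diag}(\lambda_1,\dots,\lambda_d)$, $\lambda_i>0$. Fix $\tau\in(0,1)$ and set $g_n(x)=x_\star+\sqrt{2|\ln\tau|/n}\,QD^{-1/2}x$ and $\Theta_n(x)=\exp(-n\Phi(x))$. Then, with the norm $\|\cdot\|_\gamma$ defined below (for any positive POD weights $\gamma$), $\|\Theta_n\circ g_n\|_\gamma\in\mathcal O(1)$ as $n\to\infty$.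
   Context: POD weights: $\gamma_\nu=\alpha_{|\nu|}\prod_{j\in\nu}\beta_j$ for $\nu\subseteq\{1,\dots,d\}$ with $\alpha_0=\alpha_1=1$, $\alpha_2,\ldots>0$, $\beta_1\ge\beta_2\ge\dots>0$. For $F:[-\frac12,\frac12]^d\to\mathbb R$ with continuous mixed first-order derivatives, $$\|F\|_\gamma^2=\sum_{\nu\subseteq\{1,\dots,d\}}\frac1{\gamma_\nu}\int_{[-\frac12,\frac12]^{|\nu|}}\Big(\int_{[-\frac12,\frac12]^{d-|\nu|}}\frac{\partial^{|\nu|}F}{\partial x_\nu}(x)\,dx_{\{1,\dots,d\}\setminus\nu}\Big)^2dx_\nu.$$ *)

theory Defs
  imports "HOL-Analysis.Analysis" "HOL-Library.Landau_Symbols"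
begin

definition partial_deriv :: "'n::finite \<Rightarrow> (real^'n \<Rightarrow> real) \<Rightarrow> real^'n \<Rightarrow> real" where
  "partial_deriv j f x = deriv (\<lambda>t. f (\<chi> i. if i = j then t else x $ i)) (x $ j)"

text \<open>Mixed first-order derivative with respect to the coordinates in nu
  (taken in some fixed enumeration order of nu; under the continuity hypotheses
  the order is irrelevant).\<close>
definition mixed_deriv :: "'n::finite set \<Rightarrow> (real^'n \<Rightarrow> real) \<Rightarrow> real^'n \<Rightarrow> real" where
  "mixed_deriv nu f = foldr partial_deriv (SOME xs. set xs = nu \<and> distinct xs) f"

primrec C_k_on :: "nat \<Rightarrow> (real^'n::finite) set \<Rightarrow> (real^'n \<Rightarrow> real) \<Rightarrow> bool" where
  "C_k_on 0 U f = continuous_on U f"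
| "C_k_on (Suc k) U f =
     ((\<forall>x\<in>U. f differentiable (at x)) \<and> (\<forall>j. C_k_on k U (partial_deriv j f)))"

definition cube_meas :: "'n set \<Rightarrow> ('n \<Rightarrow> real) measure" where
  "cube_meas I = PiM I (\<lambda>_. restrict_space lborel {-1/2..1/2::real})"

definition unit_cube :: "(real^'n::finite) set" where
  "unit_cube = cbox (- ((1/2) *\<^sub>R One)) ((1/2) *\<^sub>R One)"

definition pod_weight :: "(nat \<Rightarrow> real) \<Rightarrow> ('n \<Rightarrow> real) \<Rightarrow> 'n set \<Rightarrow> real" where
  "pod_weight \<alpha> \<beta> nu = \<alpha> (card nu) * (\<Prod>j\<in>nu. \<beta> j)"

definition gamma_norm :: "('n::finite set \<Rightarrow> real) \<Rightarrow> (real^'n \<Rightarrow> real) \<Rightarrow> real" where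
  "gamma_norm \<gamma> F = sqrt (\<Sum>nu\<in>Pow UNIV. (1 / \<gamma> nu) *
      (\<integral>y. (\<integral>z. mixed_deriv nu F (\<chi> i. if i \<in> nu then y i else z i)
                 \<partial>cube_meas (UNIV - nu))\<^sup>2 \<partial>cube_meas nu))"

end

theory Submission
  imports Defs "HOL-Probability.Probability"
begin


lemma line_eq: "(\<chi> i. if i = j then t else x $ i) = x + (t - x $ j) *\<^sub>R axis j (1::real)"
  by (simp add: vec_eq_iff axis_def)

lemma pd_hasderiv:
  fixes f :: "real^'n::finite \<Rightarrow> real"
  assumes "(f has_derivative f') (at x)"
  shows "((\<lambda>t. f (\<chi> i. if i = j then t else x $ i)) has_real_derivative f' (axis j 1)) (at (x $ j))"
proof -
  have lin: "linear f'" using assms has_derivative_linear by blast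
  have l: "((\<lambda>t. x + (t - x $ j) *\<^sub>R axis j (1::real)) has_derivative (\<lambda>s. s *\<^sub>R axis j 1)) (at (x$j))"
    by (auto intro!: derivative_eq_intros)
  have "x + (x $ j - x $ j) *\<^sub>R axis j (1::real) = x" by simp
  with assms have a2: "(f has_derivative f') (at (x + (x $ j - x $ j) *\<^sub>R axis j (1::real)))" by simp
  have "((\<lambda>t. f (x + (t - x $ j) *\<^sub>R axis j (1::real))) has_derivative (\<lambda>s. f' (s *\<^sub>R axis j 1))) (at (x$j))"
    using has_derivative_compose[OF l a2] by (simp add: o_def)
  moreover have "(\<lambda>s. f' (s *\<^sub>R axis j 1)) = (\<lambda>s. f' (axis j 1) * s)"
    using linear_scale[OF lin] by (auto simp: mult.commute)
  ultimately show ?thesis unfolding line_eq has_field_derivative_def by simp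
qed

lemma pd_eq:
  fixes f :: "real^'n::finite \<Rightarrow> real"
  assumes "(f has_derivative f') (at x)"
  shows "partial_deriv j f x = f' (axis j 1)"
  unfolding partial_deriv_def using pd_hasderiv[OF assms] by (rule DERIV_imp_deriv)

lemma lin_expand:
  fixes f' :: "real^'n::finite \<Rightarrow> real"
  assumes "linear f'"
  shows "f' w = (\<Sum>l\<in>UNIV. w $ l * f' (axis l 1))"
proof -
  have "f' w = f' (\<Sum>l\<in>UNIV. w $ l *\<^sub>R axis l 1)"
    using basis_expansion[of w] by (simp add: scalar_mult_eq_scaleR)
  also have "\<dots> = (\<Sum>l\<in>UNIV. w $ l * f' (axis l 1))"
    using assms by (simp add: linear_sum linear_scale)
  finally show ?thesis .
qed

lemma pd_eq_diff:
  fixes f :: "real^'n::finite \<Rightarrow> real"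
  assumes "f differentiable (at x)"
  shows "partial_deriv j f x = frechet_derivative f (at x) (axis j 1)"
  using assms by (intro pd_eq) (simp add: frechet_derivative_works[symmetric])

lemma frechet_expand:
  fixes f :: "real^'n::finite \<Rightarrow> real"
  assumes "f differentiable (at x)"
  shows "frechet_derivative f (at x) w = (\<Sum>l\<in>UNIV. w $ l * partial_deriv l f x)"
proof -
  have "linear (frechet_derivative f (at x))"
    using assms frechet_derivative_works has_derivative_linear by blast
  then show ?thesis by (subst lin_expand) (auto simp: pd_eq_diff[OF assms])
qed

lemma C_k_cont: "C_k_on k U f \<Longrightarrow> open U \<Longrightarrow> continuous_on U f"
proof (cases k)
  case 0 then show "C_k_on k U f \<Longrightarrow> open U \<Longrightarrow> continuous_on U f" by simp
next
  case (Suc m)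
  assume "C_k_on k U f" "open U"
  then have "\<forall>x\<in>U. f differentiable (at x)" using Suc by simp
  then show ?thesis
    by (meson continuous_at_imp_continuous_on differentiable_imp_continuous_within)
qed

lemma integral_bound_prob:
  fixes f :: "'a \<Rightarrow> real"
  assumes "prob_space M" "0 \<le> B" "\<And>x. x \<in> space M \<Longrightarrow> \<bar>f x\<bar> \<le> B"
  shows "\<bar>integral\<^sup>L M f\<bar> \<le> B"
proof (cases "integrable M f")
  case True
  interpret prob_space M by fact
  have "\<bar>integral\<^sup>L M f\<bar> \<le> integral\<^sup>L M (\<lambda>x. \<bar>f x\<bar>)"
    using integral_norm_bound[of M f] by simp
  also have "\<dots> \<le> B"
    using True assms(3) by (intro integral_le_const) (auto intro!: AE_I2)
  finally show ?thesis .
next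
  case False then show ?thesis using assms(2) by (simp add: not_integrable_integral_eq)
qed

lemma prob_cube: "prob_space (cube_meas I)"
  unfolding cube_meas_def
proof (intro prob_space_PiM prob_space_restrict_space)
  show "{- 1 / 2..1 / 2::real} \<in> sets lborel" by simp
  show "emeasure lborel {- 1 / 2..1 / 2::real} = 1" by (simp add: emeasure_lborel_Icc)
qed



definition bdd0 :: "(nat \<Rightarrow> real^'n::finite \<Rightarrow> real) \<Rightarrow> bool" where
  "bdd0 f \<longleftrightarrow> (\<exists>B. eventually (\<lambda>n. \<forall>x\<in>unit_cube. \<bar>f n x\<bar> \<le> B) sequentially)"

primrec good :: "nat \<Rightarrow> (nat \<Rightarrow> real^'n::finite \<Rightarrow> real) \<Rightarrow> bool" where
  "good 0 f = bdd0 f"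
| "good (Suc m) f = (bdd0 f \<and> (\<forall>n x. f n differentiable (at x)) \<and>
      (\<forall>j. good m (\<lambda>n. partial_deriv j (f n))))"

lemma good_bdd: "good m f \<Longrightarrow> bdd0 f"
  by (cases m) auto

lemma good_mono: "good (Suc m) f \<Longrightarrow> good m f"
proof (induction m arbitrary: f)
  case 0 then show ?case by simp
next
  case (Suc m) then show ?case by simp
qed

lemma good_foldr_aux: "good m f \<Longrightarrow> length js \<le> m \<Longrightarrow>
   good (m - length js) (\<lambda>n. foldr partial_deriv js (f n))"
proof (induction js)
  case Nil
  have a: "(\<lambda>n. foldr partial_deriv [] (f n)) = f" by simp
  have b: "m - length [] = m" by simp
  show ?case unfolding a b by (rule Nil.prems(1))
next
  case (Cons j js)
  have l: "length js \<le> m" using Cons.prems(2) by simp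
  have eq: "m - length js = Suc (m - length (j # js))" using Cons.prems(2) by simp
  have g: "good (Suc (m - length (j # js))) (\<lambda>n. foldr partial_deriv js (f n))"
    using Cons.IH[OF Cons.prems(1) l] unfolding eq .
  then have "good (m - length (j # js)) (\<lambda>n. partial_deriv j (foldr partial_deriv js (f n)))"
    unfolding good.simps by blast
  then show ?case by simp
qed

lemma good_foldr: "good m f \<Longrightarrow> length js \<le> m \<Longrightarrow> bdd0 (\<lambda>n. foldr partial_deriv js (f n))"
  using good_foldr_aux good_bdd by blast

lemma pd_add:
  fixes f g :: "real^'n::finite \<Rightarrow> real"
  assumes "f differentiable (at x)" "g differentiable (at x)"
  shows "partial_deriv j (\<lambda>x. f x + g x) x = partial_deriv j f x + partial_deriv j g x"
proof -
  have "((\<lambda>x. f x + g x) has_derivative (\<lambda>h. frechet_derivative f (at x) h + frechet_derivative g (at x) h)) (at x)"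
    using assms by (intro has_derivative_add) (auto simp: frechet_derivative_works[symmetric])
  from pd_eq[OF this, of j] show ?thesis by (simp add: pd_eq_diff[OF assms(1)] pd_eq_diff[OF assms(2)])
qed

lemma pd_mult:
  fixes f g :: "real^'n::finite \<Rightarrow> real"
  assumes "f differentiable (at x)" "g differentiable (at x)"
  shows "partial_deriv j (\<lambda>x. f x * g x) x = partial_deriv j f x * g x + f x * partial_deriv j g x"
proof -
  have "((\<lambda>x. f x * g x) has_derivative (\<lambda>h. f x * frechet_derivative g (at x) h + frechet_derivative f (at x) h * g x)) (at x)"
    using assms by (intro has_derivative_mult) (auto simp: frechet_derivative_works[symmetric])
  from pd_eq[OF this, of j] show ?thesis by (simp add: pd_eq_diff[OF assms(1)] pd_eq_diff[OF assms(2)])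
qed

lemma pd_const: "partial_deriv j (\<lambda>x. c) = (\<lambda>x. 0)"
  unfolding partial_deriv_def by (simp add: fun_eq_iff)

lemma bdd0_add:
  fixes f g :: "nat \<Rightarrow> real^'n::finite \<Rightarrow> real"
  shows "bdd0 f \<Longrightarrow> bdd0 g \<Longrightarrow> bdd0 (\<lambda>n x. f n x + g n x)"
  unfolding bdd0_def
proof (elim exE)
  fix B C
  assume "eventually (\<lambda>n. \<forall>x\<in>(unit_cube::(real^'n) set). \<bar>f n x\<bar> \<le> B) sequentially"
     "eventually (\<lambda>n. \<forall>x\<in>(unit_cube::(real^'n) set). \<bar>g n x\<bar> \<le> C) sequentially"
  then have "eventually (\<lambda>n. \<forall>x\<in>(unit_cube::(real^'n) set). \<bar>f n x + g n x\<bar> \<le> B + C) sequentially"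
    by eventually_elim (auto intro: order.trans[OF abs_triangle_ineq] add_mono)
  then show "\<exists>B. eventually (\<lambda>n. \<forall>x\<in>(unit_cube::(real^'n) set). \<bar>f n x + g n x\<bar> \<le> B) sequentially" by blast
qed

lemma bdd0_mult:
  fixes f g :: "nat \<Rightarrow> real^'n::finite \<Rightarrow> real"
  shows "bdd0 f \<Longrightarrow> bdd0 g \<Longrightarrow> bdd0 (\<lambda>n x. f n x * g n x)"
  unfolding bdd0_def
proof (elim exE)
  fix B C
  assume "eventually (\<lambda>n. \<forall>x\<in>(unit_cube::(real^'n) set). \<bar>f n x\<bar> \<le> B) sequentially"
     "eventually (\<lambda>n. \<forall>x\<in>(unit_cube::(real^'n) set). \<bar>g n x\<bar> \<le> C) sequentially"
  then have "eventually (\<lambda>n. \<forall>x\<in>(unit_cube::(real^'n) set). \<bar>f n x * g n x\<bar> \<le> B * C) sequentially"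
  proof eventually_elim
    case (elim n)
    show ?case
    proof
      fix x :: "real^'n" assume x: "x \<in> unit_cube"
      have "\<bar>f n x\<bar> * \<bar>g n x\<bar> \<le> B * C"
        using elim x by (intro mult_mono) (auto intro: order.trans[OF abs_ge_zero])
      then show "\<bar>f n x * g n x\<bar> \<le> B * C" by (simp add: abs_mult)
    qed
  qed
  then show "\<exists>B. eventually (\<lambda>n. \<forall>x\<in>(unit_cube::(real^'n) set). \<bar>f n x * g n x\<bar> \<le> B) sequentially" by blast
qed

lemma good_add: "good m f \<Longrightarrow> good m g \<Longrightarrow> good m (\<lambda>n x. f n x + g n x)"
proof (induction m arbitrary: f g)
  case 0 then show ?case by (simp add: bdd0_add)
next
  case (Suc m)
  have d: "\<forall>n x. (\<lambda>x. f n x + g n x) differentiable (at x)"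
    using Suc.prems by auto
  have e: "(\<lambda>n. partial_deriv j (\<lambda>x. f n x + g n x)) =
        (\<lambda>n x. partial_deriv j (f n) x + partial_deriv j (g n) x)" for j
    using Suc.prems by (auto intro!: ext pd_add)
  have "good m (\<lambda>n. partial_deriv j (\<lambda>x. f n x + g n x))" for j
    unfolding e using Suc.prems by (intro Suc.IH) auto
  moreover have "bdd0 (\<lambda>n x. f n x + g n x)" using Suc.prems by (intro bdd0_add) auto
  ultimately show ?case using d by simp
qed

lemma bdd0_zero: "bdd0 (\<lambda>(n::nat) (x::real^'a::finite). 0::real)"
  unfolding bdd0_def by (intro exI[of _ 0]) simp

lemma good_zero: "good m (\<lambda>(n::nat) (x::real^'a::finite). 0::real)"
proof (induction m)
  case 0 then show ?case using bdd0_zero by simp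
next
  case (Suc m)
  have "bdd0 (\<lambda>(n::nat) (x::real^'a). 0::real)" by (rule bdd0_zero)
  moreover have "\<forall>n (x::real^'a). (\<lambda>x. 0::real) differentiable (at x)" by simp
  ultimately show ?case using Suc.IH by (simp add: pd_const)
qed

lemma good_sum: "finite I \<Longrightarrow> (\<And>i. i \<in> I \<Longrightarrow> good m (F i)) \<Longrightarrow> good m (\<lambda>n x. \<Sum>i\<in>I. F i n x)"
proof (induction I rule: finite_induct)
  case empty then show ?case by (simp add: good_zero)
next
  case (insert a I)
  then show ?case using good_add[of m "F a" "\<lambda>n x. \<Sum>i\<in>I. F i n x"] by simp
qed

lemma good_mult: "good m f \<Longrightarrow> good m g \<Longrightarrow> good m (\<lambda>n x. f n x * g n x)"
proof (induction m arbitrary: f g)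
  case 0 then show ?case by (simp add: bdd0_mult)
next
  case (Suc m)
  have d: "\<forall>n x. (\<lambda>x. f n x * g n x) differentiable (at x)"
    using Suc.prems by auto
  have e: "(\<lambda>n. partial_deriv j (\<lambda>x. f n x * g n x)) =
        (\<lambda>n x. partial_deriv j (f n) x * g n x + f n x * partial_deriv j (g n) x)" for j
    using Suc.prems by (auto intro!: ext pd_mult)
  have gm: "good m f" "good m g" using Suc.prems good_mono by blast+
  have "good m (\<lambda>n x. partial_deriv j (f n) x * g n x + f n x * partial_deriv j (g n) x)" for j
    using Suc.prems gm by (intro good_add Suc.IH) auto
  then have "good m (\<lambda>n. partial_deriv j (\<lambda>x. f n x * g n x))" for j
    unfolding e by blast
  moreover have "bdd0 (\<lambda>n x. f n x * g n x)" using Suc.prems by (intro bdd0_mult) auto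
  ultimately show ?case using d by simp
qed



definition Sc :: "real^'n::finite \<Rightarrow> (real^'n \<Rightarrow> real^'n) \<Rightarrow> (nat \<Rightarrow> real) \<Rightarrow> (nat \<Rightarrow> real)
   \<Rightarrow> (real^'n \<Rightarrow> real) \<Rightarrow> nat \<Rightarrow> real^'n \<Rightarrow> real" where
  "Sc xs L h c f n x = c n * f (xs + h n *\<^sub>R L x)"

lemma Sc_hasderiv:
  fixes f :: "real^'n::finite \<Rightarrow> real"
  assumes L: "bounded_linear L" and f: "(f has_derivative f') (at (xs + h n *\<^sub>R L x))"
  shows "(Sc xs L h c f n has_derivative (\<lambda>v. c n * f' (h n *\<^sub>R L v))) (at x)"
proof -
  have i: "((\<lambda>x. xs + h n *\<^sub>R L x) has_derivative (\<lambda>v. h n *\<^sub>R L v)) (at x)"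
    using L by (auto intro!: derivative_eq_intros bounded_linear.has_derivative[OF L])
  have "((\<lambda>x. f (xs + h n *\<^sub>R L x)) has_derivative (\<lambda>v. f' (h n *\<^sub>R L v))) (at x)"
    using has_derivative_compose[OF i f] by (simp add: o_def)
  then have "((\<lambda>x. c n * f (xs + h n *\<^sub>R L x)) has_derivative (\<lambda>v. c n * f' (h n *\<^sub>R L v))) (at x)"
    by (rule has_derivative_mult_right)
  then show ?thesis unfolding Sc_def[abs_def] by simp
qed

lemma Sc_diff:
  fixes f :: "real^'n::finite \<Rightarrow> real"
  assumes L: "bounded_linear L" and f: "\<forall>y. f differentiable (at y)"
  shows "Sc xs L h c f n differentiable (at x)"
  using Sc_hasderiv[OF L, of f] f unfolding differentiable_def by blast

lemma Sc_pd:
  fixes f :: "real^'n::finite \<Rightarrow> real"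
  assumes L: "bounded_linear L" and f: "\<forall>y. f differentiable (at y)"
  shows "partial_deriv j (Sc xs L h c f n) =
     (\<lambda>x. \<Sum>l\<in>UNIV. Sc xs L h (\<lambda>n. c n * h n * L (axis j 1) $ l) (partial_deriv l f) n x)"
proof
  fix x
  let ?y = "xs + h n *\<^sub>R L x"
  let ?f' = "frechet_derivative f (at ?y)"
  have fd: "(f has_derivative ?f') (at ?y)" using f frechet_derivative_works by blast
  have lin: "linear ?f'" using fd has_derivative_linear by blast
  have "partial_deriv j (Sc xs L h c f n) x = c n * ?f' (h n *\<^sub>R L (axis j 1))"
    using pd_eq[OF Sc_hasderiv[where xs=xs and h=h and n=n and x=x and c=c, OF L fd]] .
  also have "\<dots> = c n * h n * ?f' (L (axis j 1))"
    using linear_scale[OF lin] by simp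
  also have "\<dots> = c n * h n * (\<Sum>l\<in>UNIV. L (axis j 1) $ l * partial_deriv l f ?y)"
    using frechet_expand[of f ?y "L (axis j 1)"] f by simp
  also have "\<dots> = (\<Sum>l\<in>UNIV. Sc xs L h (\<lambda>n. c n * h n * L (axis j 1) $ l) (partial_deriv l f) n x)"
    unfolding Sc_def by (simp add: sum_distrib_left mult.assoc)
  finally show "partial_deriv j (Sc xs L h c f n) x =
     (\<Sum>l\<in>UNIV. Sc xs L h (\<lambda>n. c n * h n * L (axis j 1) $ l) (partial_deriv l f) n x)" .
qed

lemma pd_exp:
  fixes g :: "real^'n::finite \<Rightarrow> real"
  assumes "g differentiable (at x)"
  shows "partial_deriv j (\<lambda>x. exp (g x)) x = exp (g x) * partial_deriv j g x"
proof -
  have "((\<lambda>x. exp (g x)) has_derivative (\<lambda>v. frechet_derivative g (at x) v * exp (g x))) (at x)"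
    using assms by (intro has_derivative_exp) (simp add: frechet_derivative_works[symmetric])
  from pd_eq[OF this, of j] show ?thesis by (simp add: pd_eq_diff[OF assms] mult.commute)
qed

lemma good_exp:
  assumes d: "\<forall>n x. E n differentiable (at x)"
    and b: "\<forall>n. \<forall>x\<in>unit_cube. \<bar>E n x\<bar> \<le> 1"
    and e: "\<forall>j n. partial_deriv j (E n) = (\<lambda>x. E n x * W j n x)"
    and w: "\<forall>j. good m (W j)"
  shows "good (Suc m) E"
  using w
proof (induction m)
  case 0
  have bE: "bdd0 E" unfolding bdd0_def using b by (intro exI[of _ 1]) simp
  have "good 0 (\<lambda>n x. E n x * W j n x)" for j
    using bE 0 by (simp add: bdd0_mult)
  then have "good 0 (\<lambda>n. partial_deriv j (E n))" for j using e by simp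
  then show ?case using bE d by simp
next
  case (Suc m)
  have bE: "bdd0 E" unfolding bdd0_def using b by (intro exI[of _ 1]) simp
  have gE: "good (Suc m) E" using Suc.IH Suc.prems good_mono by blast
  have "good (Suc m) (\<lambda>n x. E n x * W j n x)" for j
    using gE Suc.prems by (intro good_mult) auto
  then have "good (Suc m) (\<lambda>n. partial_deriv j (E n))" for j using e by simp
  then show ?case using bE d by simp
qed



lemma compact_unit_cube: "compact (unit_cube :: (real^'n::finite) set)"
  unfolding unit_cube_def by simp

lemma bdd_comp:
  fixes f :: "real^'n::finite \<Rightarrow> real" and L :: "real^'n \<Rightarrow> real^'n"
  assumes L: "bounded_linear L" and hb: "\<forall>n. \<bar>h n\<bar> \<le> H"
    and f: "continuous_on UNIV f" and c: "\<exists>C. eventually (\<lambda>n. \<bar>c n\<bar> \<le> C) sequentially"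
  shows "bdd0 (Sc xs L h c f)"
proof -
  let ?g = "\<lambda>p::(real \<times> (real^'n)). xs + fst p *\<^sub>R L (snd p)"
  let ?K = "?g ` ({-H..H} \<times> (unit_cube :: (real^'n) set))"
  have cL: "continuous_on UNIV L" by (rule linear_continuous_on[OF L])
  have cL2: "continuous_on UNIV (\<lambda>p::(real \<times> (real^'n)). L (snd p))"
    by (rule continuous_on_compose2[OF cL continuous_on_snd[OF continuous_on_id]]) auto
  have cg: "continuous_on UNIV ?g"
    using cL2 by (intro continuous_intros) auto
  have cK0: "compact ({-H..H} \<times> (unit_cube :: (real^'n) set))"
    using compact_unit_cube by (intro compact_Times) auto
  have "compact ?K" by (rule compact_continuous_image[OF continuous_on_subset[OF cg subset_UNIV] cK0])
  then have "compact (f ` ?K)" by (rule compact_continuous_image[OF continuous_on_subset[OF f subset_UNIV]])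
  then have "bounded (f ` ?K)" by (rule compact_imp_bounded)
  then obtain M where M0: "\<forall>y\<in>f ` ?K. norm y \<le> M" unfolding bounded_iff by blast
  then have M: "\<And>y. y \<in> f ` ?K \<Longrightarrow> norm y \<le> M" by blast
  obtain C where C: "eventually (\<lambda>n. \<bar>c n\<bar> \<le> C) sequentially" using c by blast
  have "eventually (\<lambda>n. \<forall>x\<in>unit_cube. \<bar>Sc xs L h c f n x\<bar> \<le> C * M) sequentially"
    using C
  proof eventually_elim
    case (elim n)
    show ?case
    proof
      fix x :: "real^'n" assume x: "x \<in> unit_cube"
      have "(h n, x) \<in> {-H..H} \<times> unit_cube" using hb[rule_format, of n] x by (auto simp: abs_le_iff)
      then have "f (xs + h n *\<^sub>R L x) \<in> f ` ?K" by force
      then have fm: "\<bar>f (xs + h n *\<^sub>R L x)\<bar> \<le> M" using M by simp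
      have "\<bar>c n\<bar> * \<bar>f (xs + h n *\<^sub>R L x)\<bar> \<le> C * M"
        using elim fm by (intro mult_mono) auto
      then show "\<bar>Sc xs L h c f n x\<bar> \<le> C * M" by (simp add: Sc_def abs_mult)
    qed
  qed
  then show ?thesis unfolding bdd0_def by blast
qed

lemma good_Sc:
  fixes L :: "real^'n::finite \<Rightarrow> real^'n"
  assumes L: "bounded_linear L" and hb: "\<forall>n. \<bar>h n\<bar> \<le> H"
  shows "C_k_on k UNIV f \<Longrightarrow> bdd0 (Sc xs L h c f) \<Longrightarrow>
    (\<exists>C. eventually (\<lambda>n. \<bar>c n * h n\<bar> \<le> C) sequentially) \<Longrightarrow> good k (Sc xs L h c f)"
proof (induction k arbitrary: c f)
  case 0 then show ?case by simp
next
  case (Suc k)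
  have fd: "\<forall>y. f differentiable (at y)" using Suc.prems(1) by simp
  have Ck: "C_k_on k UNIV (partial_deriv l f)" for l using Suc.prems(1) by simp
  obtain C where C: "eventually (\<lambda>n. \<bar>c n * h n\<bar> \<le> C) sequentially" using Suc.prems(3) by blast
  have gl: "good k (Sc xs L h (\<lambda>n. c n * h n * L (axis j 1) $ l) (partial_deriv l f))" for j l
  proof (rule Suc.IH[OF Ck])
    have C1: "eventually (\<lambda>n. \<bar>c n * h n * L (axis j 1) $ l\<bar> \<le> C * \<bar>L (axis j 1) $ l\<bar>) sequentially"
      using C by eventually_elim (simp add: abs_mult mult_right_mono)
    show "bdd0 (Sc xs L h (\<lambda>n. c n * h n * L (axis j 1) $ l) (partial_deriv l f))"
      using C1 by (intro bdd_comp[OF L hb] C_k_cont[OF Ck]) auto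
    have hH: "0 \<le> H" using hb[rule_format, of 0] by linarith
    have "eventually (\<lambda>n. \<bar>c n * h n * L (axis j 1) $ l * h n\<bar> \<le> C * \<bar>L (axis j 1) $ l\<bar> * H) sequentially"
      using C1
    proof eventually_elim
      case (elim n)
      have "\<bar>c n * h n * L (axis j 1) $ l\<bar> * \<bar>h n\<bar> \<le> C * \<bar>L (axis j 1) $ l\<bar> * H"
        using elim hb hH by (intro mult_mono) auto
      then show ?case by (simp add: abs_mult)
    qed
    then show "\<exists>C. eventually (\<lambda>n. \<bar>c n * h n * L (axis j 1) $ l * h n\<bar> \<le> C) sequentially" by blast
  qed
  have e: "(\<lambda>n. partial_deriv j (Sc xs L h c f n)) =
      (\<lambda>n x. \<Sum>l\<in>UNIV. Sc xs L h (\<lambda>n. c n * h n * L (axis j 1) $ l) (partial_deriv l f) n x)" for j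
    using Sc_pd[OF L fd] by simp
  have "good k (\<lambda>n. partial_deriv j (Sc xs L h c f n))" for j
    unfolding e using gl by (intro good_sum) auto
  moreover have "\<forall>n x. Sc xs L h c f n differentiable (at x)" using Sc_diff[OF L fd] by blast
  ultimately show ?case using Suc.prems(2) by simp
qed



lemma grad0:
  fixes \<Phi> :: "real^'n::finite \<Rightarrow> real"
  assumes xs_int: "xs \<in> interior unit_cube"
    and sep: "\<forall>r>0. (INF x\<in>{x\<in>unit_cube. norm (x - xs) > r}. ereal (\<Phi> x)) - ereal (\<Phi> xs) > 0"
    and fd: "\<Phi> differentiable (at xs)"
  shows "partial_deriv l \<Phi> xs = 0"
proof -
  obtain r0 where r0: "r0 > 0" "ball xs r0 \<subseteq> unit_cube"
    using xs_int mem_interior by blast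
  have mn: "\<Phi> xs \<le> \<Phi> x" if x: "x \<in> unit_cube" for x
  proof (cases "x = xs")
    case True then show ?thesis by simp
  next
    case False
    define r where "r = norm (x - xs) / 2"
    have r: "r > 0" using False by (simp add: r_def)
    let ?I = "INF y\<in>{y\<in>unit_cube. norm (y - xs) > r}. ereal (\<Phi> y)"
    have s: "?I - ereal (\<Phi> xs) > 0" using sep r by blast
    have "norm (x - xs) > r" using r by (simp add: r_def)
    then have "?I \<le> ereal (\<Phi> x)" using x by (intro INF_lower) simp
    then have "?I - ereal (\<Phi> xs) \<le> ereal (\<Phi> x) - ereal (\<Phi> xs)"
      by (rule ereal_minus_mono) simp
    with s have "0 < ereal (\<Phi> x) - ereal (\<Phi> xs)" by (rule less_le_trans)
    then have "0 < \<Phi> x - \<Phi> xs" by simp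
    then show ?thesis by simp
  qed
  let ?f' = "frechet_derivative \<Phi> (at xs)"
  have hd: "(\<Phi> has_derivative ?f') (at xs)" using fd frechet_derivative_works by blast
  have D: "((\<lambda>t. \<Phi> (\<chi> i. if i = l then t else xs $ i)) has_real_derivative ?f' (axis l 1)) (at (xs $ l))"
    by (rule pd_hasderiv[OF hd])
  have lm: "\<forall>t. \<bar>xs $ l - t\<bar> < r0 \<longrightarrow> \<Phi> (\<chi> i. if i = l then xs $ l else xs $ i) \<le> \<Phi> (\<chi> i. if i = l then t else xs $ i)"
  proof (intro allI impI)
    fix t assume t: "\<bar>xs $ l - t\<bar> < r0"
    have e1: "(\<chi> i. if i = l then xs $ l else xs $ i) = xs" by (simp add: vec_eq_iff)
    have "dist xs (\<chi> i. if i = l then t else xs $ i) = \<bar>t - xs $ l\<bar>"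
      unfolding line_eq dist_norm by simp
    then have "(\<chi> i. if i = l then t else xs $ i) \<in> ball xs r0" using t by (simp add: abs_minus_commute)
    then show "\<Phi> (\<chi> i. if i = l then xs $ l else xs $ i) \<le> \<Phi> (\<chi> i. if i = l then t else xs $ i)"
      unfolding e1 using r0 mn by blast
  qed
  have "?f' (axis l 1) = 0" by (rule DERIV_local_min[OF D r0(1) lm])
  then show ?thesis using pd_eq_diff[OF fd] by simp
qed



lemma lip:
  fixes \<Phi> :: "real^'n::finite \<Rightarrow> real"
  assumes U: "open U" "xs \<in> U" and Ck: "C_k_on (Suc (Suc m)) U \<Phi>"
    and g0: "partial_deriv l \<Phi> xs = 0"
  shows "\<exists>e>0. \<exists>M. \<forall>y\<in>cball xs e. \<bar>partial_deriv l \<Phi> y\<bar> \<le> M * norm (y - xs)"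
proof -
  obtain e where e: "e > 0" "cball xs e \<subseteq> U" using U open_contains_cball by blast
  define g where "g = partial_deriv l \<Phi>"
  have Cg: "C_k_on (Suc m) U g" using Ck by (simp add: g_def)
  have gd: "\<forall>y\<in>U. g differentiable (at y)" using Cg by simp
  have gc: "continuous_on U (partial_deriv i g)" for i
    using Cg U(1) by (intro C_k_cont[of m]) simp_all
  have "\<exists>M. \<forall>y\<in>cball xs e. \<bar>partial_deriv i g y\<bar> \<le> M" for i
  proof -
    have "compact (partial_deriv i g ` cball xs e)"
      by (rule compact_continuous_image[OF continuous_on_subset[OF gc e(2)] compact_cball])
    then have "bounded (partial_deriv i g ` cball xs e)" by (rule compact_imp_bounded)
    then obtain M where "\<forall>z\<in>partial_deriv i g ` cball xs e. norm z \<le> M" unfolding bounded_iff by blast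
    then show ?thesis by auto
  qed
  then have "\<forall>i. \<exists>M. \<forall>y\<in>cball xs e. \<bar>partial_deriv i g y\<bar> \<le> M" by blast
  then obtain Mf where Mf: "\<forall>i. \<forall>y\<in>cball xs e. \<bar>partial_deriv i g y\<bar> \<le> Mf i"
    using choice[of "\<lambda>i M. \<forall>y\<in>cball xs e. \<bar>partial_deriv i g y\<bar> \<le> M"] by blast
  define Mt where "Mt = (\<Sum>i\<in>UNIV. \<bar>Mf i\<bar>)"
  let ?D = "\<lambda>y. frechet_derivative g (at y)"
  have hd: "(g has_derivative ?D y) (at y within cball xs e)" if y: "y \<in> cball xs e" for y
  proof -
    have "g differentiable (at y)" using gd e(2) y by blast
    then show ?thesis using frechet_derivative_works has_derivative_at_withinI by blast
  qed
  have on: "onorm (?D y) \<le> Mt" if y: "y \<in> cball xs e" for y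
  proof (rule onorm_le)
    fix v :: "real^'n"
    have gy: "g differentiable (at y)" using gd e(2) y by blast
    have "norm (?D y v) = \<bar>\<Sum>i\<in>UNIV. v $ i * partial_deriv i g y\<bar>"
      using frechet_expand[OF gy, of v] by simp
    also have "\<dots> \<le> (\<Sum>i\<in>UNIV. \<bar>v $ i * partial_deriv i g y\<bar>)" by (rule sum_abs)
    also have "\<dots> \<le> (\<Sum>i\<in>UNIV. norm v * \<bar>Mf i\<bar>)"
    proof (rule sum_mono)
      fix i :: 'n
      have "\<bar>v $ i\<bar> * \<bar>partial_deriv i g y\<bar> \<le> norm v * \<bar>Mf i\<bar>"
      proof (rule mult_mono)
        show "\<bar>v $ i\<bar> \<le> norm v" by (rule component_le_norm_cart)
        have "\<bar>partial_deriv i g y\<bar> \<le> Mf i" using Mf y by blast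
        then show "\<bar>partial_deriv i g y\<bar> \<le> \<bar>Mf i\<bar>" by linarith
      qed simp_all
      then show "\<bar>v $ i * partial_deriv i g y\<bar> \<le> norm v * \<bar>Mf i\<bar>" by (simp add: abs_mult)
    qed
    also have "\<dots> = Mt * norm v" by (simp add: Mt_def sum_distrib_left mult.commute)
    finally show "norm (?D y v) \<le> Mt * norm v" .
  qed
  have "\<forall>y\<in>cball xs e. \<bar>g y\<bar> \<le> Mt * norm (y - xs)"
  proof
    fix y assume y: "y \<in> cball xs e"
    have "norm (g y - g xs) \<le> Mt * norm (y - xs)"
      by (rule differentiable_bound[OF convex_cball hd on y]) (use e in auto)
    then show "\<bar>g y\<bar> \<le> Mt * norm (y - xs)" using g0 by (simp add: g_def)
  qed
  then show ?thesis using e(1) unfolding g_def by blast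
qed



lemma h_facts:
  fixes c :: real
  assumes c: "0 \<le> c"
  defines "h \<equiv> \<lambda>n::nat. sqrt (c / real n)"
  shows "\<forall>n. \<bar>h n\<bar> \<le> sqrt c" "\<forall>n. 0 \<le> h n" "\<forall>n. real n * (h n * h n) \<le> c"
    "h \<longlonglongrightarrow> 0"
proof -
  show "\<forall>n. 0 \<le> h n" using c by (simp add: h_def)
  show "\<forall>n. \<bar>h n\<bar> \<le> sqrt c"
  proof
    fix n
    have "c / real n \<le> c"
    proof (cases n)
      case (Suc m)
      have "c * 1 \<le> c * real n" using c Suc by (intro mult_left_mono) auto
      then show ?thesis using Suc by (simp add: divide_le_eq)
    qed (simp add: c)
    then show "\<bar>h n\<bar> \<le> sqrt c" using c by (simp add: h_def)
  qed
  show "\<forall>n. real n * (h n * h n) \<le> c"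
  proof
    fix n
    have "h n * h n = c / real n" using c by (simp add: h_def)
    then show "real n * (h n * h n) \<le> c" using c by (cases n) auto
  qed
  have "(\<lambda>n. sqrt (c / real n)) \<longlonglongrightarrow> sqrt 0"
    by (intro tendsto_real_sqrt) (rule lim_const_over_n)
  then show "h \<longlonglongrightarrow> 0" by (simp add: h_def)
qed

lemma L_lin:
  fixes Q :: "real^'n::finite^'n" and lam :: "'n \<Rightarrow> real"
  shows "bounded_linear (\<lambda>x. Q *v (\<chi> i. x $ i / sqrt (lam i)))"
proof -
  have "linear (\<lambda>x::real^'n. Q *v (\<chi> i. x $ i / sqrt (lam i)))"
  proof (rule linearI)
    fix x y :: "real^'n" and r :: real
    have "(\<chi> i. (x + y) $ i / sqrt (lam i)) = (\<chi> i. x $ i / sqrt (lam i)) + (\<chi> i. y $ i / sqrt (lam i))"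
      by (simp add: vec_eq_iff add_divide_distrib)
    then show "Q *v (\<chi> i. (x + y) $ i / sqrt (lam i)) = Q *v (\<chi> i. x $ i / sqrt (lam i)) + Q *v (\<chi> i. y $ i / sqrt (lam i))"
      by (simp add: matrix_vector_right_distrib)
    have "(\<chi> i. (r *\<^sub>R x) $ i / sqrt (lam i)) = r *\<^sub>R (\<chi> i. x $ i / sqrt (lam i))"
      by (simp add: vec_eq_iff)
    then show "Q *v (\<chi> i. (r *\<^sub>R x) $ i / sqrt (lam i)) = r *\<^sub>R (Q *v (\<chi> i. x $ i / sqrt (lam i)))"
      by (simp add: matrix_vector_mult_scaleR)
  qed
  then show ?thesis by (simp add: linear_conv_bounded_linear)
qed

lemma L_bound:
  fixes L :: "real^'n::finite \<Rightarrow> real^'n"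
  assumes L: "bounded_linear L"
  shows "\<exists>K\<ge>0. \<forall>x\<in>unit_cube. norm (L x) \<le> K"
proof -
  have "compact (L ` unit_cube)"
    by (rule compact_continuous_image[OF linear_continuous_on[OF L] compact_unit_cube])
  then have "bounded (L ` unit_cube)" by (rule compact_imp_bounded)
  then obtain K where K: "\<forall>z\<in>L ` unit_cube. norm z \<le> K" unfolding bounded_iff by blast
  have "\<forall>x\<in>unit_cube. norm (L x) \<le> max K 0" using K by force
  then show ?thesis by (intro exI[of _ "max K 0"]) simp
qed



lemma term_bdd0:
  fixes L :: "real^'n::finite \<Rightarrow> real^'n" and g :: "real^'n \<Rightarrow> real"
  assumes h0: "\<forall>n. 0 \<le> h n" and nh: "\<forall>n. real n * (h n * h n) \<le> c"
    and ht: "h \<longlonglongrightarrow> 0"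
    and K: "\<forall>x\<in>unit_cube. norm (L x) \<le> K" "K \<ge> 0"
    and e: "e > 0" and lp: "\<forall>y\<in>cball xs e. \<bar>g y\<bar> \<le> M * norm (y - xs)"
  shows "bdd0 (Sc xs L h (\<lambda>n. - real n * h n * a) g)"
proof -
  have "e / (K + 1) > 0" using e K(2) by simp
  then have ev: "eventually (\<lambda>n. h n < e / (K + 1)) sequentially"
    using order_tendstoD(2)[OF ht] by blast
  have "eventually (\<lambda>n. \<forall>x\<in>unit_cube. \<bar>Sc xs L h (\<lambda>n. - real n * h n * a) g n x\<bar> \<le> \<bar>a\<bar> * \<bar>M\<bar> * K * c) sequentially"
    using ev
  proof eventually_elim
    case (elim n)
    show ?case
    proof
      fix x :: "real^'n" assume x: "x \<in> unit_cube"
      let ?y = "xs + h n *\<^sub>R L x"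
      have hn: "0 \<le> h n" using h0 by blast
      have "h n * (K + 1) < e" using elim K(2) by (simp add: pos_less_divide_eq)
      then have hK: "h n * K \<le> e" using hn by (smt (verit) mult_left_mono)
      have nLx: "norm (L x) \<le> K" using K(1) x by blast
      have ny: "norm (?y - xs) = h n * norm (L x)" using hn by simp
      also have "\<dots> \<le> h n * K" using nLx hn by (intro mult_left_mono) auto
      finally have ny2: "norm (?y - xs) \<le> h n * K" .
      have "?y \<in> cball xs e" using ny2 hK by (simp add: dist_norm norm_minus_commute)
      then have "\<bar>g ?y\<bar> \<le> M * norm (?y - xs)" using lp by blast
      also have "\<dots> \<le> \<bar>M\<bar> * norm (?y - xs)" by (intro mult_right_mono) auto
      also have "\<dots> \<le> \<bar>M\<bar> * (h n * K)" using ny2 by (intro mult_left_mono) auto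
      finally have gy: "\<bar>g ?y\<bar> \<le> \<bar>M\<bar> * (h n * K)" .
      have "\<bar>Sc xs L h (\<lambda>n. - real n * h n * a) g n x\<bar> = (real n * h n * \<bar>a\<bar>) * \<bar>g ?y\<bar>"
        using hn by (simp add: Sc_def abs_mult)
      also have "\<dots> \<le> (real n * h n * \<bar>a\<bar>) * (\<bar>M\<bar> * (h n * K))"
        using gy hn by (intro mult_left_mono) auto
      also have "\<dots> = \<bar>a\<bar> * \<bar>M\<bar> * K * (real n * (h n * h n))" by (simp add: algebra_simps)
      also have "\<dots> \<le> \<bar>a\<bar> * \<bar>M\<bar> * K * c" using nh K(2) by (intro mult_left_mono) auto
      finally show "\<bar>Sc xs L h (\<lambda>n. - real n * h n * a) g n x\<bar> \<le> \<bar>a\<bar> * \<bar>M\<bar> * K * c" .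
    qed
  qed
  then show ?thesis unfolding bdd0_def by blast
qed

lemma good_main:
  fixes \<Phi> :: "real^'n::finite \<Rightarrow> real" and L :: "real^'n \<Rightarrow> real^'n"
  assumes nonneg: "\<forall>x. \<Phi> x \<ge> 0"
    and xs_int: "xs \<in> interior unit_cube"
    and sep: "\<forall>r>0. (INF x\<in>{x\<in>unit_cube. norm (x - xs) > r}. ereal (\<Phi> x)) - ereal (\<Phi> xs) > 0"
    and smooth_loc: "\<exists>U. open U \<and> xs \<in> U \<and> C_k_on (4 * CARD('n) + 3) U \<Phi>"
    and smooth_glob: "C_k_on CARD('n) UNIV \<Phi>"
    and L: "bounded_linear L"
    and c: "0 \<le> c"
    and h0: "\<forall>n. 0 \<le> h n" and hb: "\<forall>n. \<bar>h n\<bar> \<le> H" and nh: "\<forall>n. real n * (h n * h n) \<le> c"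
    and ht: "h \<longlonglongrightarrow> 0"
  shows "good CARD('n) (\<lambda>n x. exp (Sc xs L h (\<lambda>n. - real n) \<Phi> n x))"
proof -
  define k where "k = CARD('n) - 1"
  have k: "CARD('n) = Suc k" unfolding k_def using zero_less_card_finite[where 'a='n] by linarith
  have Cg: "C_k_on (Suc k) UNIV \<Phi>" using smooth_glob k by simp
  have fd: "\<forall>y. \<Phi> differentiable (at y)" using Cg by simp
  have gC: "C_k_on k UNIV (partial_deriv l \<Phi>)" for l using Cg by simp
  have g0: "partial_deriv l \<Phi> xs = 0" for l
    using grad0[OF xs_int sep] fd by blast
  obtain U where U: "open U" "xs \<in> U" "C_k_on (4 * CARD('n) + 3) U \<Phi>" using smooth_loc by blast
  have eq43: "4 * CARD('n) + 3 = Suc (Suc (4 * CARD('n) + 1))" by simp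
  have U3: "C_k_on (Suc (Suc (4 * CARD('n) + 1))) U \<Phi>" using U(3) by (simp only: eq43)
  obtain K where K: "\<forall>x\<in>unit_cube. norm (L x) \<le> K" "K \<ge> 0" using L_bound[OF L] by blast
  define c0 where "c0 = (\<lambda>n::nat. - real n)"
  define W where "W = (\<lambda>j n x. \<Sum>l\<in>UNIV. Sc xs L h (\<lambda>n. c0 n * h n * L (axis j 1) $ l) (partial_deriv l \<Phi>) n x)"
  have tb: "bdd0 (Sc xs L h (\<lambda>n. c0 n * h n * L (axis j 1) $ l) (partial_deriv l \<Phi>))" for j l
  proof -
    obtain e M where eM: "e > 0" "\<forall>y\<in>cball xs e. \<bar>partial_deriv l \<Phi> y\<bar> \<le> M * norm (y - xs)"
      using lip[OF U(1,2) U3 g0] by blast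
    show ?thesis unfolding c0_def by (rule term_bdd0[OF h0 nh ht K eM])
  qed
  have cb: "\<exists>C. eventually (\<lambda>n. \<bar>c0 n * h n * L (axis j 1) $ l * h n\<bar> \<le> C) sequentially" for j l
  proof -
    have "\<bar>c0 n * h n * L (axis j 1) $ l * h n\<bar> \<le> \<bar>L (axis j 1) $ l\<bar> * c" for n
    proof -
      have "\<bar>c0 n * h n * L (axis j 1) $ l * h n\<bar> = \<bar>L (axis j 1) $ l\<bar> * (real n * (h n * h n))"
        using h0 by (simp add: c0_def abs_mult)
      also have "\<dots> \<le> \<bar>L (axis j 1) $ l\<bar> * c" using nh by (intro mult_left_mono) auto
      finally show ?thesis .
    qed
    then show ?thesis by (intro exI[of _ "\<bar>L (axis j 1) $ l\<bar> * c"] always_eventually) auto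
  qed
  have gW: "good k (W j)" for j
    unfolding W_def
    by (intro good_sum good_Sc[OF L hb] gC tb cb) auto
  have Sd: "Sc xs L h c0 \<Phi> n differentiable (at x)" for n x using Sc_diff[OF L fd] by blast
  have dE: "\<forall>n x. (\<lambda>x. exp (Sc xs L h c0 \<Phi> n x)) differentiable (at x)"
  proof (intro allI)
    fix n x
    have "(Sc xs L h c0 \<Phi> n has_derivative frechet_derivative (Sc xs L h c0 \<Phi> n) (at x)) (at x)"
      using Sd frechet_derivative_works by blast
    from has_derivative_exp[OF this] show "(\<lambda>x. exp (Sc xs L h c0 \<Phi> n x)) differentiable (at x)"
      unfolding differentiable_def by blast
  qed
  have bE: "\<forall>n. \<forall>x\<in>unit_cube. \<bar>exp (Sc xs L h c0 \<Phi> n x)\<bar> \<le> 1"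
  proof (intro allI ballI)
    fix n x
    have "c0 n * \<Phi> (xs + h n *\<^sub>R L x) \<le> 0"
      using nonneg by (simp add: c0_def mult_nonneg_nonneg)
    then show "\<bar>exp (Sc xs L h c0 \<Phi> n x)\<bar> \<le> 1" by (simp add: Sc_def)
  qed
  have eE: "\<forall>j n. partial_deriv j (\<lambda>x. exp (Sc xs L h c0 \<Phi> n x)) = (\<lambda>x. exp (Sc xs L h c0 \<Phi> n x) * W j n x)"
  proof (intro allI ext)
    fix j n x
    show "partial_deriv j (\<lambda>x. exp (Sc xs L h c0 \<Phi> n x)) x = exp (Sc xs L h c0 \<Phi> n x) * W j n x"
      unfolding pd_exp[OF Sd] Sc_pd[OF L fd] W_def by simp
  qed
  have "good (Suc k) (\<lambda>n x. exp (Sc xs L h c0 \<Phi> n x))"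
    by (rule good_exp[OF dE bE eE]) (use gW in blast)
  then show ?thesis using k by (simp add: c0_def)
qed



lemma One_nth: "(One :: real^'n::finite) $ i = 1"
proof -
  have "axis i (1::real) \<in> Basis" by simp
  then show ?thesis unfolding cart_eq_inner_axis[of One i] by (rule inner_sum_Basis)
qed

lemma pt_cube:
  fixes nu :: "'n::finite set"
  assumes y: "y \<in> space (cube_meas nu)" and z: "z \<in> space (cube_meas (UNIV - nu))"
  shows "(\<chi> i. if i \<in> nu then y i else z i) \<in> (unit_cube :: (real^'n) set)"
proof -
  have y': "\<And>i. i \<in> nu \<Longrightarrow> y i \<in> {-1/2..1/2}"
    using y by (auto simp: cube_meas_def space_PiM space_restrict_space PiE_iff)
  have z': "\<And>i. i \<notin> nu \<Longrightarrow> z i \<in> {-1/2..1/2}"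
    using z by (auto simp: cube_meas_def space_PiM space_restrict_space PiE_iff)
  show ?thesis unfolding unit_cube_def mem_box_cart
  proof
    fix i :: 'n
    show "(- ((1 / 2) *\<^sub>R One)) $ i \<le> (\<chi> i. if i \<in> nu then y i else z i) $ i \<and>
          (\<chi> i. if i \<in> nu then y i else z i) $ i \<le> ((1 / 2) *\<^sub>R One) $ i"
    proof -
      have o: "(One::real^'n) $ i = 1" by (rule One_nth)
      have a: "(- ((1/2) *\<^sub>R (One::real^'n))) $ i = -1/2"
        by (simp only: vector_uminus_component vector_scaleR_component o) simp
      have b: "((1/2) *\<^sub>R (One::real^'n)) $ i = 1/2"
        by (simp only: vector_scaleR_component o) simp
      show ?thesis unfolding a b using y'[of i] z'[of i] by (cases "i \<in> nu") auto
    qed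
  qed
qed

lemma sq_bound: "\<bar>x::real\<bar> \<le> B \<Longrightarrow> \<bar>x\<^sup>2\<bar> \<le> B\<^sup>2"
proof -
  assume "\<bar>x\<bar> \<le> B"
  then have "\<bar>x\<bar>\<^sup>2 \<le> B\<^sup>2" by (intro power_mono) auto
  then show ?thesis by simp
qed

lemma norm_bound:
  fixes F :: "nat \<Rightarrow> real^'n::finite \<Rightarrow> real"
  assumes g: "good CARD('n) F" and gp: "\<forall>nu. \<gamma> nu > 0"
  shows "(\<lambda>n. gamma_norm \<gamma> (F n)) \<in> O(\<lambda>_. 1)"
proof -
  have bd: "bdd0 (\<lambda>n. mixed_deriv nu (F n))" for nu :: "'n set"
  proof -
    let ?ls = "SOME xs. set xs = nu \<and> distinct xs"
    have "set ?ls = nu \<and> distinct ?ls"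
      by (rule someI_ex[OF finite_distinct_list]) simp
    then have "length ?ls = card nu" using distinct_card by fastforce
    also have "\<dots> \<le> CARD('n)" by (rule card_mono) auto
    finally have len: "length ?ls \<le> CARD('n)" .
    have "(\<lambda>n. mixed_deriv nu (F n)) = (\<lambda>n. foldr partial_deriv ?ls (F n))"
      by (simp add: mixed_deriv_def)
    then show ?thesis using good_foldr[OF g len] by simp
  qed
  then have "\<forall>nu. \<exists>B. eventually (\<lambda>n. \<forall>x\<in>unit_cube. \<bar>mixed_deriv nu (F n) x\<bar> \<le> B) sequentially"
    unfolding bdd0_def by blast
  then obtain B where B: "\<forall>nu. eventually (\<lambda>n. \<forall>x\<in>unit_cube. \<bar>mixed_deriv nu (F n) x\<bar> \<le> B nu) sequentially"
    using choice[of "\<lambda>nu B. eventually (\<lambda>n. \<forall>x\<in>unit_cube. \<bar>mixed_deriv nu (F n) x\<bar> \<le> B) sequentially"] by blast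
  define B' where "B' = (\<lambda>nu. max (B nu) 0)"
  define S where "S = (\<Sum>nu\<in>Pow UNIV. (1 / \<gamma> nu) * (B' nu)\<^sup>2)"
  have ev: "eventually (\<lambda>n. \<forall>nu. \<forall>x\<in>unit_cube. \<bar>mixed_deriv nu (F n) x\<bar> \<le> B nu) sequentially"
    using B by (intro eventually_all_finite) blast
  have "eventually (\<lambda>n. norm (gamma_norm \<gamma> (F n)) \<le> sqrt S * norm (1::real)) sequentially"
    using ev
  proof eventually_elim
    case (elim n)
    let ?T = "\<lambda>nu. (1 / \<gamma> nu) *
      (\<integral>y. (\<integral>z. mixed_deriv nu (F n) (\<chi> i. if i \<in> nu then y i else z i)
                 \<partial>cube_meas (UNIV - nu))\<^sup>2 \<partial>cube_meas nu)"
    have tb: "\<bar>?T nu\<bar> \<le> (1 / \<gamma> nu) * (B' nu)\<^sup>2" for nu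
    proof -
      have inner: "\<bar>\<integral>z. mixed_deriv nu (F n) (\<chi> i. if i \<in> nu then y i else z i) \<partial>cube_meas (UNIV - nu)\<bar> \<le> B' nu"
        if y: "y \<in> space (cube_meas nu)" for y
      proof (rule integral_bound_prob[OF prob_cube])
        show "0 \<le> B' nu" by (simp add: B'_def)
        fix z assume z: "z \<in> space (cube_meas (UNIV - nu))"
        have "\<bar>mixed_deriv nu (F n) (\<chi> i. if i \<in> nu then y i else z i)\<bar> \<le> B nu"
          using elim pt_cube[OF y z] by blast
        then show "\<bar>mixed_deriv nu (F n) (\<chi> i. if i \<in> nu then y i else z i)\<bar> \<le> B' nu"
          by (simp add: B'_def)
      qed
      have outer: "\<bar>\<integral>y. (\<integral>z. mixed_deriv nu (F n) (\<chi> i. if i \<in> nu then y i else z i)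
                 \<partial>cube_meas (UNIV - nu))\<^sup>2 \<partial>cube_meas nu\<bar> \<le> (B' nu)\<^sup>2"
      proof (rule integral_bound_prob[OF prob_cube])
        show "0 \<le> (B' nu)\<^sup>2" by simp
        fix y assume y: "y \<in> space (cube_meas nu)"
        show "\<bar>(\<integral>z. mixed_deriv nu (F n) (\<chi> i. if i \<in> nu then y i else z i)
                 \<partial>cube_meas (UNIV - nu))\<^sup>2\<bar> \<le> (B' nu)\<^sup>2"
          by (rule sq_bound[OF inner[OF y]])
      qed
      have gpos: "0 < 1 / \<gamma> nu" using gp by simp
      have a1: "\<bar>1 / \<gamma> nu\<bar> = 1 / \<gamma> nu" using gpos by simp
      have "\<bar>?T nu\<bar> = \<bar>1 / \<gamma> nu\<bar> * \<bar>\<integral>y. (\<integral>z. mixed_deriv nu (F n) (\<chi> i. if i \<in> nu then y i else z i)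
                 \<partial>cube_meas (UNIV - nu))\<^sup>2 \<partial>cube_meas nu\<bar>" by (rule abs_mult)
      also have "\<dots> \<le> (1 / \<gamma> nu) * (B' nu)\<^sup>2" unfolding a1
        by (rule mult_left_mono[OF outer]) (use gpos in simp)
      finally show ?thesis .
    qed
    have "\<bar>\<Sum>nu\<in>Pow UNIV. ?T nu\<bar> \<le> (\<Sum>nu\<in>Pow UNIV. \<bar>?T nu\<bar>)" by (rule sum_abs)
    also have "\<dots> \<le> S" unfolding S_def by (rule sum_mono) (rule tb)
    finally have sS: "\<bar>\<Sum>nu\<in>Pow UNIV. ?T nu\<bar> \<le> S" .
    have "norm (gamma_norm \<gamma> (F n)) = \<bar>sqrt (\<Sum>nu\<in>Pow UNIV. ?T nu)\<bar>"
      by (simp add: gamma_norm_def)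
    also have "\<dots> = sqrt \<bar>\<Sum>nu\<in>Pow UNIV. ?T nu\<bar>" by (rule real_sqrt_abs'[symmetric])
    also have "\<dots> \<le> sqrt S" using sS by simp
    finally show ?case by simp
  qed
  then show ?thesis by (rule bigoI)
qed


theorem lemma5:
  fixes \<Phi> :: "real^('n::{finite,linorder}) \<Rightarrow> real"
    and xs :: "real^('n::{finite,linorder})"
    and Q :: "real^('n::{finite,linorder})^('n::{finite,linorder})"
    and lam :: "('n::{finite,linorder}) \<Rightarrow> real"
    and \<tau> :: real
    and \<alpha> :: "nat \<Rightarrow> real"
    and \<beta> :: "('n::{finite,linorder}) \<Rightarrow> real"
  assumes nonneg: "\<forall>x. \<Phi> x \<ge> 0"
    and xs_int: "xs \<in> interior unit_cube"
    and sep: "\<forall>r>0. (INF x\<in>{x\<in>unit_cube. norm (x - xs) > r}. ereal (\<Phi> x)) - ereal (\<Phi> xs) > 0"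
    and smooth_loc: "\<exists>U. open U \<and> xs \<in> U \<and> C_k_on (4 * CARD(('n::{finite,linorder})) + 3) U \<Phi>"
    and posdef: "\<forall>v. v \<noteq> 0 \<longrightarrow>
        v \<bullet> ((\<chi> i j. partial_deriv i (partial_deriv j \<Phi>) xs) *v v) > 0"
    and smooth_glob: "C_k_on CARD(('n::{finite,linorder})) UNIV \<Phi>"
    and Q_orth: "orthogonal_matrix Q"
    and lam_pos: "\<forall>i. lam i > 0"
    and eig: "(\<chi> i j. partial_deriv i (partial_deriv j \<Phi>) xs)
                = Q ** (\<chi> i j. if i = j then lam i else 0) ** transpose Q"
    and tau: "0 < \<tau>" "\<tau> < 1"
    and alpha: "\<alpha> 0 = 1" "\<alpha> 1 = 1" "\<forall>k. \<alpha> k > 0"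
    and beta_pos: "\<forall>j. \<beta> j > 0"
    and beta_mono: "\<forall>i j. i \<le> j \<longrightarrow> \<beta> j \<le> \<beta> i"
  shows "(\<lambda>n::nat. gamma_norm (pod_weight \<alpha> \<beta>)
            (\<lambda>x. exp (- real n * \<Phi> (xs + sqrt (2 * \<bar>ln \<tau>\<bar> / real n) *\<^sub>R
                     (Q *v (\<chi> i. x $ i / sqrt (lam i)))))))
         \<in> O(\<lambda>_. 1)"
  proof -
  define c where "c = 2 * \<bar>ln \<tau>\<bar>"
  have c0: "0 \<le> c" by (simp add: c_def)
  define h where "h = (\<lambda>n::nat. sqrt (c / real n))"
  have hf: "\<forall>n. \<bar>h n\<bar> \<le> sqrt c" "\<forall>n. 0 \<le> h n" "\<forall>n. real n * (h n * h n) \<le> c" "h \<longlonglongrightarrow> 0"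
    using h_facts[OF c0] by (simp_all add: h_def)
  define L where "L = (\<lambda>x::real^('n::{finite,linorder}). Q *v (\<chi> i. x $ i / sqrt (lam i)))"
  have Ll: "bounded_linear L" unfolding L_def by (rule L_lin)
  have gm: "good CARD('n) (\<lambda>n x. exp (Sc xs L h (\<lambda>n. - real n) \<Phi> n x))"
    by (rule good_main[OF nonneg xs_int sep smooth_loc smooth_glob Ll c0 hf(2) hf(1) hf(3) hf(4)])
  have gp: "\<forall>nu. pod_weight \<alpha> \<beta> nu > 0"
    using alpha(3) beta_pos by (auto simp: pod_weight_def intro!: mult_pos_pos prod_pos)
  have O1: "(\<lambda>n. gamma_norm (pod_weight \<alpha> \<beta>) (\<lambda>x. exp (Sc xs L h (\<lambda>n. - real n) \<Phi> n x))) \<in> O(\<lambda>_. 1)"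
    using norm_bound[OF gm gp] by simp
  have eqG: "(\<lambda>n. gamma_norm (pod_weight \<alpha> \<beta>) (\<lambda>x. exp (Sc xs L h (\<lambda>n. - real n) \<Phi> n x))) =
     (\<lambda>n::nat. gamma_norm (pod_weight \<alpha> \<beta>)
            (\<lambda>x. exp (- real n * \<Phi> (xs + sqrt (2 * \<bar>ln \<tau>\<bar> / real n) *\<^sub>R
                     (Q *v (\<chi> i. x $ i / sqrt (lam i)))))))"
    by (simp add: Sc_def L_def h_def c_def)
  show ?thesis using O1 unfolding eqG .
qed

end
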